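(* Let $G$ be a digraph and $f$ a discrete Morse function on $G$, and let $\gamma$ be an allowed elementary $n$-path in $G$. Then the following two conditions cannot both hold: (i'') there exists an allowed elementary $(n-1)$-path $\beta<\gamma$ with $f(\beta)=f(\gamma)$; (ii'') there exists an allowed elementary $(n+1)$-path $\alpha>\gamma$ with $f(\alpha)=f(\gamma)$.
   Context: A digraph $G=(V,E)$ consists of a set $V$ and $E\subseteq(V\times V)\setminus\{(v,v)\}$; $(u,v)\in E$ is written $u\to v$. An allowed elementary $n$-path is a sequence $v_0\cdots v_n$ of vertices with $v_{i-1}\to v_i\in E$ for $1\le i\le n$. For allowed elementary paths, $\gamma'<\gamma$ (or $\gamma>\gamma'$) means $\gamma'$ is obtained from $\gamma$ by deleting some entries. A map $f:V\to[0,+\infty)$ is a discrete Morse function on $G$ if for every allowed elementary path $v_0\cdots v_n$: (i) there is at most one index $i$ with $f(v_i)=0$ such that $v_0\cdots v_{i-1}v_{i+1}\cdots v_n$ is an allowed elementary $(n-1)$-path; (ii) there is at most one vertex $u$ with $f(u)=0$ such that for some $-1\le j\le n$ the sequence $v_0\cdots v_juv_{j+1}\cdots v_n$ (meaning $uv_0\cdots v_n$ if $j=-1$, $v_0\cdots v_nu$ if $j=n$) is an allowed elementary $(n+1)$-path. Set $f(v_0\cdots v_n)=\sum_if(v_i)$. *)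

theory Defs
  imports Complex_Main "HOL-Library.Sublist"
begin

definition digraph :: "'a set \<Rightarrow> ('a \<times> 'a) set \<Rightarrow> bool" where
  "digraph V E \<longleftrightarrow> E \<subseteq> V \<times> V \<and> (\<forall>v. (v, v) \<notin> E)"

text \<open>An allowed elementary path v_0 ... v_n, represented as the nonempty list
  [v_0, ..., v_n]; it is an n-path iff its length is n+1.\<close>
definition allowed_path :: "'a set \<Rightarrow> ('a \<times> 'a) set \<Rightarrow> 'a list \<Rightarrow> bool" where
  "allowed_path V E p \<longleftrightarrow> p \<noteq> [] \<and> set p \<subseteq> V \<and>
     (\<forall>i. Suc i < length p \<longrightarrow> (p ! i, p ! Suc i) \<in> E)"

definition allowed_n_path :: "'a set \<Rightarrow> ('a \<times> 'a) set \<Rightarrow> nat \<Rightarrow> 'a list \<Rightarrow> bool" where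
  "allowed_n_path V E n p \<longleftrightarrow> allowed_path V E p \<and> length p = Suc n"

definition path_val :: "('a \<Rightarrow> real) \<Rightarrow> 'a list \<Rightarrow> real" where
  "path_val f p = sum_list (map f p)"

text \<open>Discrete Morse function on G = (V,E).  Deleting entry i of p is
  take i p @ drop (Suc i) p; inserting u at position j (0..length p) is
  take j p @ u # drop j p.\<close>
definition discrete_morse :: "'a set \<Rightarrow> ('a \<times> 'a) set \<Rightarrow> ('a \<Rightarrow> real) \<Rightarrow> bool" where
  "discrete_morse V E f \<longleftrightarrow>
     (\<forall>v\<in>V. f v \<ge> 0) \<and>
     (\<forall>p. allowed_path V E p \<longrightarrow>
        (\<forall>i i'. i < length p \<and> f (p ! i) = 0 \<and> allowed_path V E (take i p @ drop (Suc i) p) \<and>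
                i' < length p \<and> f (p ! i') = 0 \<and> allowed_path V E (take i' p @ drop (Suc i') p)
                \<longrightarrow> i = i') \<and>
        (\<forall>u u'. u \<in> V \<and> f u = 0 \<and> (\<exists>j\<le>length p. allowed_path V E (take j p @ u # drop j p)) \<and>
                u' \<in> V \<and> f u' = 0 \<and> (\<exists>j\<le>length p. allowed_path V E (take j p @ u' # drop j p))
                \<longrightarrow> u = u'))"

end

theory Submission
  imports Defs
begin

lemma ap_succ: "allowed_path V E p \<longleftrightarrow> p \<noteq> [] \<and> set p \<subseteq> V \<and> successively (\<lambda>x y. (x,y)\<in>E) p"
  unfolding allowed_path_def successively_conv_nth by simp

lemma succ_suffix: "successively P (l @ r) \<Longrightarrow> successively P r"
  by (simp add: successively_append_iff)

lemma succ_glue: "successively P (l @ x # m) \<Longrightarrow> successively P (x # r) \<Longrightarrow> successively P (l @ x # r)"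
  unfolding successively_append_iff list.sel by blast

lemma one_del: "subseq xs ys \<Longrightarrow> length ys = Suc (length xs) \<Longrightarrow> \<exists>a v b. ys = a @ v # b \<and> xs = a @ b"
proof (induction ys arbitrary: xs)
  case Nil then show ?case by simp
next
  case (Cons y ys)
  note IH = Cons.IH and P = Cons.prems
  show ?case
  proof (cases xs)
    case Nil then show ?thesis using P by (intro exI[of _ "[]"]) auto
  next
    case (Cons x xs')
    note xs = this
    show ?thesis
    proof (cases "x = y")
      case True
      then have "subseq xs' ys" "length ys = Suc (length xs')" using xs P by auto
      then obtain a v b where "ys = a @ v # b" "xs' = a @ b" using IH by blast
      then show ?thesis using xs True by (intro exI[of _ "y#a"]) auto
    next
      case False
      then have s: "subseq xs ys" using xs P by auto
      have "length xs = length ys" using P by simp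
      then have "xs = ys" using subseq_same_length[OF s] by simp
      then show ?thesis by (intro exI[of _ "[]"]) auto
    qed
  qed
qed

lemma morse_del:
  assumes "discrete_morse V E f" "allowed_path V E p" "p = a@v#b" "p = c@w#d"
    "f v = 0" "f w = 0" "allowed_path V E (a@b)" "allowed_path V E (c@d)"
  shows "length a = length c"
proof -
  have 1: "p ! length a = v" "take (length a) p = a" "drop (Suc (length a)) p = b" "length a < length p"
    using assms(3) by auto
  have 2: "p ! length c = w" "take (length c) p = c" "drop (Suc (length c)) p = d" "length c < length p"
    using assms(4) by auto
  have D: "\<forall>p. allowed_path V E p \<longrightarrow>
        (\<forall>i i'. i < length p \<and> f (p ! i) = 0 \<and> allowed_path V E (take i p @ drop (Suc i) p) \<and>
                i' < length p \<and> f (p ! i') = 0 \<and> allowed_path V E (take i' p @ drop (Suc i') p)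
                \<longrightarrow> i = i') \<and>
        (\<forall>u u'. u \<in> V \<and> f u = 0 \<and> (\<exists>j\<le>length p. allowed_path V E (take j p @ u # drop j p)) \<and>
                u' \<in> V \<and> f u' = 0 \<and> (\<exists>j\<le>length p. allowed_path V E (take j p @ u' # drop j p))
                \<longrightarrow> u = u')"
    using assms(1) unfolding discrete_morse_def by (rule conjunct2)
  note D2 = conjunct1[OF D[rule_format, OF assms(2)]]
  show ?thesis
    apply (rule D2[rule_format])
    using assms(5-8) 1 2 by simp
qed

lemma adj_lemma:
  assumes "discrete_morse V E f" "(x,y) \<in> E" "x \<in> V" "y \<in> V" "f x = 0" "f y = 0"
  shows False
proof -
  have p: "allowed_path V E [x,y]" using assms(2-4) unfolding ap_succ by simp
  have q: "allowed_path V E ([] @ [y])" "allowed_path V E ([x] @ [])" using assms(3,4) unfolding ap_succ by simp_all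
  have "length ([]::'a list) = length [x]"
    by (rule morse_del[OF assms(1) p _ _ assms(5,6) q]) simp_all
  then show False by simp
qed

theorem lemma4p4:
  fixes V :: "'a set" and E :: "('a \<times> 'a) set" and f :: "'a \<Rightarrow> real"
    and n :: nat and \<gamma> :: "'a list"
  assumes "digraph V E"
    and "discrete_morse V E f"
    and "allowed_n_path V E n \<gamma>"
  shows "\<not> ((\<exists>\<beta>. allowed_n_path V E (n - 1) \<beta> \<and> length \<beta> = n \<and> strict_subseq \<beta> \<gamma>
                 \<and> path_val f \<beta> = path_val f \<gamma>) \<and>
            (\<exists>\<alpha>. allowed_n_path V E (Suc n) \<alpha> \<and> strict_subseq \<gamma> \<alpha>
                 \<and> path_val f \<alpha> = path_val f \<gamma>))"
proof
  assume H: "(\<exists>\<beta>. allowed_n_path V E (n - 1) \<beta> \<and> length \<beta> = n \<and> strict_subseq \<beta> \<gamma>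
                 \<and> path_val f \<beta> = path_val f \<gamma>) \<and>
            (\<exists>\<alpha>. allowed_n_path V E (Suc n) \<alpha> \<and> strict_subseq \<gamma> \<alpha>
                 \<and> path_val f \<alpha> = path_val f \<gamma>)"
  then obtain \<beta> \<alpha> where b: "allowed_path V E \<beta>" "length \<beta> = n" "subseq \<beta> \<gamma>" "path_val f \<beta> = path_val f \<gamma>"
    and a: "allowed_path V E \<alpha>" "length \<alpha> = Suc (Suc n)" "subseq \<gamma> \<alpha>" "path_val f \<alpha> = path_val f \<gamma>"
    unfolding allowed_n_path_def strict_subseq_def by auto
  have g: "allowed_path V E \<gamma>" "length \<gamma> = Suc n" using assms(3) unfolding allowed_n_path_def by auto
  obtain xs v ys where gv: "\<gamma> = xs @ v # ys" "\<beta> = xs @ ys" using one_del[OF b(3)] b(2) g(2) by auto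
  obtain as u bs where au: "\<alpha> = as @ u # bs" "\<gamma> = as @ bs" using one_del[OF a(3)] a(2) g(2) by auto
  have fv: "f v = 0" using b(4) gv unfolding path_val_def by simp
  have fu: "f u = 0" using a(4) au unfolding path_val_def by simp
  have E: "successively (\<lambda>x y. (x,y)\<in>E) \<alpha>" "successively (\<lambda>x y. (x,y)\<in>E) \<beta>"
    "set \<alpha> \<subseteq> V" "set \<beta> \<subseteq> V" using a(1) b(1) unfolding ap_succ by auto
  note adj = adj_lemma[OF assms(2)]
  have "\<exists>us. as = xs @ us \<and> us @ bs = v # ys \<or> as @ us = xs \<and> bs = us @ v # ys"
    using au(2) gv(1) append_eq_append_conv2[of as bs xs "v#ys"] by auto
  then obtain us where "as = xs @ us \<and> us @ bs = v # ys \<or> as @ us = xs \<and> bs = us @ v # ys" by blast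
  then show False
  proof
    assume c: "as = xs @ us \<and> us @ bs = v # ys"
    show False
    proof (cases us)
      case Nil
      then have q: "\<alpha> = xs @ u # v # ys" using c au by simp
      have "(u,v) \<in> E" using E(1) unfolding q by (simp add: successively_append_iff)
      moreover have "u \<in> V" "v \<in> V" using E(3) unfolding q by auto
      ultimately show False using adj fu fv by blast
    next
      case (Cons v' ds)
      then have ds: "\<alpha> = xs @ v # ds @ u # bs" "ys = ds @ bs" using c au by auto
      show False
      proof (cases ds)
        case Nil
        then have q: "\<alpha> = xs @ v # u # bs" using ds by simp
        have "(v,u) \<in> E" using E(1) unfolding q by (simp add: successively_append_iff)
        moreover have "u \<in> V" "v \<in> V" using E(3) unfolding q by auto
        ultimately show False using adj fu fv by blast
      next
        case (Cons d ds')
        have s1: "successively (\<lambda>x y. (x,y)\<in>E) (xs @ d # (ds' @ bs))" using E(2) gv(2) ds Cons by simp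
        have s2: "successively (\<lambda>x y. (x,y)\<in>E) (d # ds' @ u # bs)"
          using succ_suffix[of _ "xs @ [v]" "d # ds' @ u # bs"] E(1) ds Cons by simp
        have "allowed_path V E (xs @ ds @ u # bs)" unfolding ap_succ
          using succ_glue[OF s1 s2] Cons E(3,4) ds gv by auto
        moreover have "allowed_path V E ((xs @ v # ds) @ bs)" using g au ds by simp
        ultimately have "length xs = length (xs @ v # ds)"
          using morse_del[OF assms(2) a(1), of xs v "ds @ u # bs" "xs @ v # ds" u bs] ds fu fv by auto
        then show False by simp
      qed
    qed
  next
    assume c: "as @ us = xs \<and> bs = us @ v # ys"
    then have ds: "\<alpha> = as @ u # us @ v # ys" using au by auto
    show False
    proof (cases us)
      case Nil
      then have q: "\<alpha> = as @ u # v # ys" using ds by simp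
      have "(u,v) \<in> E" using E(1) unfolding q by (simp add: successively_append_iff)
      moreover have "u \<in> V" "v \<in> V" using E(3) unfolding q by auto
      ultimately show False using adj fu fv by blast
    next
      case (Cons d ds')
      have s1: "successively (\<lambda>x y. (x,y)\<in>E) ((as @ [u]) @ d # (ds' @ v # ys))" using E(1) ds Cons by simp
      have s2: "successively (\<lambda>x y. (x,y)\<in>E) (d # ds' @ ys)"
      proof -
        have hb: "\<beta> = as @ (d # ds' @ ys)" using gv(2) c Cons by auto
        show ?thesis using succ_suffix[of _ as "d # ds' @ ys"] E(2) unfolding hb by blast
      qed
      have "allowed_path V E (as @ u # us @ ys)" unfolding ap_succ
        using succ_glue[OF s1 s2] Cons E(3,4) ds gv c by auto
      moreover have "allowed_path V E (as @ us @ v # ys)" using g au c by simp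
      ultimately have "length as = length (as @ u # us)"
        using morse_del[OF assms(2) a(1), of as u "us @ v # ys" "as @ u # us" v ys] ds fu fv by auto
      then show False by simp
    qed
  qed
qed

end
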